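(* Let $\varrho$ be a proximate order and $\sigma_2>\sigma_1>0$. Then the inclusion map $A_{\varrho,\sigma_1}\hookrightarrow A_{\varrho,\sigma_2}$ is compact.
   Context: $\mathbb{R}_n$ is the real Clifford algebra generated by $e_1,\dots,e_n$ with $e_ie_j=-e_je_i$ ($i\ne j$), $e_i^2=-1$, with Euclidean norm $|a|^2=\sum_Aa_A^2$. Paravectors $x=x_0+\sum x_\ell e_\ell$ are identified with $\mathbb{R}^{n+1}$; $\mathbb{S}=\{\sum x_\ell e_\ell:\sum x_\ell^2=1\}$. $\mathcal{SM}_L(\mathbb{R}^{n+1})$ is the set of entire left slice monogenic functions: $f(u+jv)=f_0(u,v)+jf_1(u,v)$ for all $u,v\in\mathbb{R}$, $j\in\mathbb{S}$, with $f_0,f_1:\mathbb{R}^2\to\mathbb{R}_n$ continuously differentiable, $f_0$ even and $f_1$ odd in $v$, $\partial_uf_0=\partial_vf_1$, $\partial_vf_0=-\partial_uf_1$. A proximate order is a differentiable $\varrho:[0,\infty)\to[0,\infty)$ with $\lim_{r\to\infty}\varrho(r)=\rho>0$ and $\lim_{r\to\infty}\varrho'(r)r\ln r=0$. For $\sigma>0$, $A_{\varrho,\sigma}$ is the Banach space $\{f\in\mathcal{SM}_L(\mathbb{R}^{n+1}):\|f\|_{\varrho,\sigma}:=\sup_x|f(x)|e^{-\sigma|x|^{\varrho(|x|)}}<\infty\}$. *)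

theory Defs
  imports "HOL-Analysis.Analysis"
begin

text \<open>The generators e_1..e_n are indexed by a finite
linearly ordered type 'n (so n = CARD('n)); an element of R_n is a real vector indexed by
subsets A of the generators (basis blade e_A), with the Euclidean norm.\<close>

type_synonym 'n clif = "real ^ ('n set)"

definition csign :: "'n::{finite,linorder} set \<Rightarrow> 'n set \<Rightarrow> real" where
  "csign A B = (-1) ^ (card {(a, b). a \<in> A \<and> b \<in> B \<and> b < a} + card (A \<inter> B))"

text \<open>e_A e_B = csign A B e_(A symmetric-difference B), extended bilinearly.\<close>
definition cmul :: "'n::{finite,linorder} clif \<Rightarrow> 'n clif \<Rightarrow> 'n clif" where
  "cmul a b = (\<chi> C. \<Sum>A\<in>UNIV. csign A ((A - C) \<union> (C - A)) * (a $ A) * (b $ ((A - C) \<union> (C - A))))"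

text \<open>Paravectors x_0 + sum x_l e_l, identified with R^(n+1) = real \<times> real^'n.\<close>
definition para :: "real \<times> (real ^ 'n::finite) \<Rightarrow> 'n clif" where
  "para p = (\<chi> A. if A = {} then fst p else if (\<exists>i. A = {i}) then snd p $ (THE i. A = {i}) else 0)"

definition sphereS :: "(real ^ 'n::finite) set" where
  "sphereS = {j. norm j = 1}"

definition C1_partials ::
  "(real \<Rightarrow> real \<Rightarrow> 'n::finite clif) \<Rightarrow> (real \<Rightarrow> real \<Rightarrow> 'n clif) \<Rightarrow> (real \<Rightarrow> real \<Rightarrow> 'n clif) \<Rightarrow> bool" where
  "C1_partials F Fu Fv \<longleftrightarrow>
     (\<forall>u v. ((\<lambda>t. F t v) has_vector_derivative Fu u v) (at u)) \<and>
     (\<forall>u v. ((\<lambda>t. F u t) has_vector_derivative Fv u v) (at v)) \<and>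
     continuous_on UNIV (\<lambda>(u, v). Fu u v) \<and> continuous_on UNIV (\<lambda>(u, v). Fv u v)"

definition slice_monogenic :: "(real \<times> (real ^ 'n::{finite,linorder}) \<Rightarrow> 'n clif) \<Rightarrow> bool" where
  "slice_monogenic f \<longleftrightarrow>
    (\<exists>f0 f1 f0u f0v f1u f1v.
       C1_partials f0 f0u f0v \<and> C1_partials f1 f1u f1v \<and>
       (\<forall>u v. f0 u (-v) = f0 u v) \<and> (\<forall>u v. f1 u (-v) = - f1 u v) \<and>
       (\<forall>u v. f0u u v = f1v u v) \<and> (\<forall>u v. f0v u v = - f1u u v) \<and>
       (\<forall>u v j. j \<in> sphereS \<longrightarrow> f (u, v *\<^sub>R j) = f0 u v + cmul (para (0, j)) (f1 u v)))"

definition proximate_order :: "(real \<Rightarrow> real) \<Rightarrow> bool" where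
  "proximate_order \<rho> \<longleftrightarrow>
     (\<forall>r\<ge>0. \<rho> r \<ge> 0) \<and>
     (\<forall>r\<ge>0. \<rho> differentiable (at r within {0..})) \<and>
     (\<exists>\<rho>0>0. (\<rho> \<longlongrightarrow> \<rho>0) at_top) \<and>
     ((\<lambda>r. deriv \<rho> r * r * ln r) \<longlongrightarrow> 0) at_top"

definition weight :: "(real \<Rightarrow> real) \<Rightarrow> real \<Rightarrow> real \<times> (real ^ 'n::finite) \<Rightarrow> real" where
  "weight \<rho> \<sigma> x = exp (- \<sigma> * (norm x powr \<rho> (norm x)))"

definition Anorm :: "(real \<Rightarrow> real) \<Rightarrow> real \<Rightarrow> (real \<times> (real ^ 'n) \<Rightarrow> 'n::finite clif) \<Rightarrow> real" where
  "Anorm \<rho> \<sigma> f = (SUP x. norm (f x) * weight \<rho> \<sigma> x)"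

definition Aspace :: "(real \<Rightarrow> real) \<Rightarrow> real \<Rightarrow> (real \<times> (real ^ 'n::{finite,linorder}) \<Rightarrow> 'n clif) set" where
  "Aspace \<rho> \<sigma> = {f. slice_monogenic f \<and> bdd_above (range (\<lambda>x. norm (f x) * weight \<rho> \<sigma> x))}"

end

theory Submission
  imports Defs "HOL-Complex_Analysis.Complex_Analysis" "HOL-Real_Asymp.Real_Asymp"
begin

lemma cmul_comp: "cmul a b $ C = (\<Sum>A\<in>UNIV. csign A ((A - C) \<union> (C - A)) * (a $ A) * (b $ ((A - C) \<union> (C - A))))"
  by (simp add: cmul_def)

lemma cmul_minus_right: "cmul a (- b) = - cmul a b"
  by (simp add: vec_eq_iff cmul_comp sum_negf[symmetric])

lemma cmul_minus_left: "cmul (- a) b = - cmul a b"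
  by (simp add: vec_eq_iff cmul_comp sum_negf[symmetric])

lemma cmul_diff_right: "cmul a (b - c) = cmul a b - cmul a c"
  by (simp add: vec_eq_iff cmul_comp sum_subtractf[symmetric] algebra_simps)

lemma cmul_zero_left: "cmul 0 b = 0"
  by (simp add: vec_eq_iff cmul_comp) 

lemma cmul_zero_right: "cmul a 0 = 0"
  by (simp add: vec_eq_iff cmul_comp) 

lemma csign_sq: "csign A B * csign A B = 1"
  by (simp add: csign_def flip: power_add mult_2)

lemma abs_csign: "\<bar>csign A B\<bar> = 1"
  by (simp add: csign_def)

lemma norm_cmul_le:
  fixes a b :: "'n::{finite,linorder} clif"
  shows "norm (cmul a b) \<le> of_nat (CARD('n set)) * of_nat (CARD('n set)) * norm a * norm b"
proof -
  have c: "\<bar>cmul a b $ C\<bar> \<le> of_nat (CARD('n set)) * (norm a * norm b)" for C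
  proof -
    have "\<bar>cmul a b $ C\<bar> \<le> (\<Sum>A\<in>UNIV. \<bar>csign A ((A - C) \<union> (C - A)) * (a $ A) * (b $ ((A - C) \<union> (C - A)))\<bar>)"
      unfolding cmul_comp by (rule sum_abs)
    also have "\<dots> \<le> (\<Sum>A\<in>(UNIV::'n set set). norm a * norm b)"
      apply (rule sum_mono)
      apply (simp add: abs_mult abs_csign)
      apply (intro mult_mono)
      apply (auto simp: component_le_norm_cart)
      done
    finally show ?thesis by simp
  qed
  have "norm (cmul a b) \<le> (\<Sum>C\<in>UNIV. \<bar>cmul a b $ C\<bar>)" by (rule norm_le_l1_cart)
  also have "\<dots> \<le> (\<Sum>C\<in>(UNIV::'n set set). of_nat (CARD('n set)) * (norm a * norm b))"
    by (rule sum_mono) (rule c)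
  finally show ?thesis by (simp add: mult_ac)
qed

lemma para_axis: "para (0, axis i 1) = (\<chi> A. if A = {i} then 1 else 0)"
proof -
  have "para (0, axis i 1) $ A = (if A = {i} then 1 else 0)" for A
  proof (cases "\<exists>k. A = {k}")
    case True
    then obtain k where "A = {k}" by blast
    then show ?thesis by (auto simp: para_def axis_def)
  qed (auto simp: para_def)
  then show ?thesis by (simp add: vec_eq_iff)
qed

lemma cmul_axis: "cmul (para (0, axis i 1)) b $ C = csign {i} (({i} - C) \<union> (C - {i})) * b $ (({i} - C) \<union> (C - {i}))"
  unfolding cmul_comp para_axis
  by (simp add: if_distrib if_distribR cong: if_cong)

lemma norm_cmul_axis: "norm (cmul (para (0, axis i 1)) b) = norm b"
proof -
  let ?s = "\<lambda>C. ({i} - C) \<union> (C - {i})"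
  have inv: "?s (?s C) = C" for C by auto
  have bij: "bij ?s" by (metis (no_types, lifting) bij_betw_imageI inj_on_inverseI inv surj_def)
  have "(\<Sum>C\<in>UNIV. (cmul (para (0, axis i 1)) b $ C)\<^sup>2) = (\<Sum>C\<in>UNIV. (b $ ?s C)\<^sup>2)"
    by (rule sum.cong) (auto simp: cmul_axis power_mult_distrib power2_eq_square csign_sq[unfolded power2_eq_square])
  also have "\<dots> = (\<Sum>C\<in>UNIV. (b $ C)\<^sup>2)"
    using sum.reindex_bij_betw[OF bij, of "\<lambda>C. (b $ C)\<^sup>2"] by simp
  finally show ?thesis by (simp add: norm_vec_def L2_set_def)
qed

lemma holo_from_CR:
  fixes a b au av bu bv :: "real \<Rightarrow> real \<Rightarrow> real"
  assumes da: "\<And>u v. ((\<lambda>t. a t v) has_real_derivative au u v) (at u)"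
    and dav: "\<And>u v. ((\<lambda>t. a u t) has_real_derivative av u v) (at v)"
    and db: "\<And>u v. ((\<lambda>t. b t v) has_real_derivative bu u v) (at u)"
    and dbv: "\<And>u v. ((\<lambda>t. b u t) has_real_derivative bv u v) (at v)"
    and ca: "continuous_on UNIV (\<lambda>(u, v). av u v)"
    and cb: "continuous_on UNIV (\<lambda>(u, v). bv u v)"
    and CR1: "\<And>u v. au u v = bv u v" and CR2: "\<And>u v. av u v = - bu u v"
  shows "(\<lambda>z. complex_of_real (a (Re z) (Im z)) + \<i> * complex_of_real (b (Re z) (Im z))) holomorphic_on UNIV"
proof -
  define c where "c = (\<lambda>u v. complex_of_real (a u v) + \<i> * complex_of_real (b u v))"
  define cu where "cu = (\<lambda>u v. complex_of_real (au u v) + \<i> * complex_of_real (bu u v))"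
  define cv where "cv = (\<lambda>u v. complex_of_real (av u v) + \<i> * complex_of_real (bv u v))"
  have dcu: "((\<lambda>t. c t v) has_derivative (\<lambda>t. t *\<^sub>R cu u v)) (at u)" for u v
  proof -
    have "((\<lambda>t. c t v) has_vector_derivative cu u v) (at u)"
      unfolding c_def cu_def
      by (intro derivative_eq_intros has_vector_derivative_real_field) (auto intro: da db)
    then show ?thesis by (simp add: has_vector_derivative_def)
  qed
  have dcv: "((\<lambda>t. c u t) has_derivative blinfun_apply (blinfun_scaleR_left (cv u v))) (at v within UNIV)" for u v
  proof -
    have "((\<lambda>t. c u t) has_vector_derivative cv u v) (at v)"
      unfolding c_def cv_def
      by (intro derivative_eq_intros has_vector_derivative_real_field) (auto intro: dav dbv)
    then show ?thesis by (simp add: has_vector_derivative_def)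
  qed
  have ccv: "continuous_on UNIV (\<lambda>(u, v). cv u v)"
    unfolding cv_def using ca cb
    by (auto intro!: continuous_intros simp: split_beta)
  have ccv2: "continuous (at (u, v) within UNIV \<times> UNIV) (\<lambda>(u, v). blinfun_scaleR_left (cv u v))" for u v
  proof -
    have "continuous_on UNIV (\<lambda>(u, v). blinfun_scaleR_left (cv u v))"
      using ccv by (auto intro!: continuous_intros simp: split_beta)
    then show ?thesis by (simp add: continuous_on_eq_continuous_at)
  qed
  have dc: "((\<lambda>(u, v). c u v) has_derivative (\<lambda>(tx, ty). tx *\<^sub>R cu u v + blinfun_scaleR_left (cv u v) ty)) (at (u, v))" for u v
    using has_derivative_partialsI[OF dcu[THEN has_derivative_at_withinI] dcv ccv2 UNIV_I convex_UNIV] by simp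
  have "(\<lambda>z. c (Re z) (Im z)) holomorphic_on UNIV"
  proof (rule holomorphic_onI)
    fix z :: complex assume "z \<in> UNIV"
    have dRI: "((\<lambda>z::complex. (Re z, Im z)) has_derivative (\<lambda>w. (Re w, Im w))) (at z)"
      by (intro derivative_eq_intros) auto
    have "((\<lambda>z. (\<lambda>(u, v). c u v) (Re z, Im z)) has_derivative
        (\<lambda>w. (\<lambda>(tx, ty). tx *\<^sub>R cu (Re z) (Im z) + blinfun_scaleR_left (cv (Re z) (Im z)) ty) (Re w, Im w))) (at z)"
      using has_derivative_compose[OF dRI dc[of "Re z" "Im z"]] by simp
    moreover have "(\<lambda>w. (\<lambda>(tx, ty). tx *\<^sub>R cu (Re z) (Im z) + blinfun_scaleR_left (cv (Re z) (Im z)) ty) (Re w, Im w))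
       = (\<lambda>w. w * cu (Re z) (Im z))"
    proof
      fix w :: complex
      show "(\<lambda>(tx, ty). tx *\<^sub>R cu (Re z) (Im z) + blinfun_scaleR_left (cv (Re z) (Im z)) ty) (Re w, Im w) = w * cu (Re z) (Im z)"
        by (simp add: cu_def cv_def CR1 CR2 complex_eq_iff scaleR_conv_of_real algebra_simps)
    qed
    ultimately have "((\<lambda>z. c (Re z) (Im z)) has_field_derivative cu (Re z) (Im z)) (at z)"
      by (simp add: has_field_derivative_def mult.commute[of _ "cu (Re z) (Im z)"])
    then show "(\<lambda>z. c (Re z) (Im z)) field_differentiable at z within UNIV"
      unfolding field_differentiable_def by blast
  qed
  then show ?thesis by (simp add: c_def)
qed

definition jz :: "real ^ 'n::finite" where "jz = axis undefined 1"

lemma jz_sphere: "jz \<in> sphereS" by (simp add: jz_def sphereS_def)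

lemma comp_deriv:
  fixes g :: "real \<Rightarrow> real ^ 'a::finite"
  assumes "(g has_vector_derivative d) (at t)"
  shows "((\<lambda>s. g s $ A) has_real_derivative d $ A) (at t)"
proof -
  have "((\<lambda>s. g s $ A) has_derivative (\<lambda>h. (h *\<^sub>R d) $ A)) (at t)"
    using bounded_linear.has_derivative[OF bounded_linear_vec_nth assms[unfolded has_vector_derivative_def]] .
  moreover have "(\<lambda>h. h * d $ A) = (*) (d $ A)" by (auto simp: fun_eq_iff)
  ultimately show ?thesis
    by (simp add: has_field_derivative_def)
qed

lemma comp_cont:
  fixes g :: "real \<Rightarrow> real \<Rightarrow> real ^ 'a::finite"
  assumes "continuous_on UNIV (\<lambda>(u, v). g u v)"
  shows "continuous_on UNIV (\<lambda>(u, v). g u v $ A)"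
proof -
  have "continuous_on UNIV (\<lambda>p. (\<lambda>(u, v). g u v) p $ A)"
    using assms by (intro continuous_intros)
  then show ?thesis by (simp add: split_beta)
qed

lemma para_zero: "para (0, 0) = 0"
  by (simp add: para_def vec_eq_iff)

lemma para_uminus: "para (0, - j) = - para (0, j)"
  by (simp add: para_def vec_eq_iff)

lemma slice_formula:
  fixes f0 f1 :: "real \<Rightarrow> real \<Rightarrow> 'n::{finite,linorder} clif"
  assumes ev: "\<And>u v. f0 u (-v) = f0 u v" and od: "\<And>u v. f1 u (-v) = - f1 u v"
    and j: "norm j = 1"
  shows "f0 u (norm (v *\<^sub>R j)) + cmul (para (0, sgn (v *\<^sub>R j))) (f1 u (norm (v *\<^sub>R j)))
       = f0 u v + cmul (para (0, j)) (f1 u v)"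
proof -
  have z: "f1 u 0 = 0" using od[of u 0] by (simp add: vec_eq_iff)
  consider "v > 0" | "v = 0" | "v < 0" by linarith
  then show ?thesis
  proof cases
    case 1 then show ?thesis using j by (simp add: sgn_scaleR sgn_div_norm)
  next
    case 2 then show ?thesis using z by (simp add: para_zero cmul_zero_left cmul_zero_right)
  next
    case 3 then show ?thesis using j
      by (simp add: sgn_scaleR sgn_div_norm ev od para_uminus cmul_minus_left cmul_minus_right)
  qed
qed

lemma slice_rep:
  fixes f :: "real \<times> (real ^ 'n::{finite,linorder}) \<Rightarrow> 'n clif"
  assumes "slice_monogenic f"
  shows "\<exists>f0 f1.
    (\<forall>A. (\<lambda>z. complex_of_real (f0 (Re z) (Im z) $ A) + \<i> * complex_of_real (f1 (Re z) (Im z) $ A)) holomorphic_on UNIV) \<and>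
    (\<forall>u v. f0 u (-v) = f0 u v) \<and> (\<forall>u v. f1 u (-v) = - f1 u v) \<and>
    (\<forall>u w. f (u, w) = f0 u (norm w) + cmul (para (0, sgn w)) (f1 u (norm w))) \<and>
    (\<forall>u v. norm (f0 u v) \<le> (norm (f (u, v *\<^sub>R jz)) + norm (f (u, (-v) *\<^sub>R jz))) / 2) \<and>
    (\<forall>u v. norm (f1 u v) \<le> (norm (f (u, v *\<^sub>R jz)) + norm (f (u, (-v) *\<^sub>R jz))) / 2)"
proof -
  obtain f0 f1 f0u f0v f1u f1v where
    C0: "C1_partials f0 f0u f0v" and C1: "C1_partials f1 f1u f1v" and
    ev: "\<And>u v. f0 u (-v) = f0 u v" and od: "\<And>u v. f1 u (-v) = - f1 u v" and
    CR1: "\<And>u v. f0u u v = f1v u v" and CR2: "\<And>u v. f0v u v = - f1u u v" and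
    sl: "\<And>u v j. j \<in> sphereS \<Longrightarrow> f (u, v *\<^sub>R j) = f0 u v + cmul (para (0, j)) (f1 u v)"
    using assms unfolding slice_monogenic_def by blast
  have holo: "(\<lambda>z. complex_of_real (f0 (Re z) (Im z) $ A) + \<i> * complex_of_real (f1 (Re z) (Im z) $ A)) holomorphic_on UNIV" for A
  proof (rule holo_from_CR[where au="\<lambda>u v. f0u u v $ A" and av="\<lambda>u v. f0v u v $ A"
          and bu="\<lambda>u v. f1u u v $ A" and bv="\<lambda>u v. f1v u v $ A"])
    show "\<And>u v. ((\<lambda>t. f0 t v $ A) has_real_derivative f0u u v $ A) (at u)"
      by (intro comp_deriv) (use C0 in \<open>auto simp: C1_partials_def\<close>)
    show "\<And>u v. ((\<lambda>t. f0 u t $ A) has_real_derivative f0v u v $ A) (at v)"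
      by (intro comp_deriv) (use C0 in \<open>auto simp: C1_partials_def\<close>)
    show "\<And>u v. ((\<lambda>t. f1 t v $ A) has_real_derivative f1u u v $ A) (at u)"
      by (intro comp_deriv) (use C1 in \<open>auto simp: C1_partials_def\<close>)
    show "\<And>u v. ((\<lambda>t. f1 u t $ A) has_real_derivative f1v u v $ A) (at v)"
      by (intro comp_deriv) (use C1 in \<open>auto simp: C1_partials_def\<close>)
    show "continuous_on UNIV (\<lambda>(u, v). f0v u v $ A)"
      by (intro comp_cont) (use C0 in \<open>auto simp: C1_partials_def\<close>)
    show "continuous_on UNIV (\<lambda>(u, v). f1v u v $ A)"
      by (intro comp_cont) (use C1 in \<open>auto simp: C1_partials_def\<close>)
  qed (simp_all add: CR1 CR2)
  have rep: "f (u, w) = f0 u (norm w) + cmul (para (0, sgn w)) (f1 u (norm w))" for u w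
  proof (cases "w = 0")
    case True
    have "f (u, w) = f (u, 0 *\<^sub>R jz)" using True by simp
    also have "\<dots> = f0 u 0 + cmul (para (0, jz)) (f1 u 0)" using sl jz_sphere by blast
    also have "\<dots> = f0 u 0"
    proof -
      have "f1 u 0 = 0" using od[of u 0] by (simp add: vec_eq_iff)
      then show ?thesis by (simp add: cmul_zero_right)
    qed
    finally show ?thesis using True by (simp add: para_zero cmul_zero_left)
  next
    case False
    have "sgn w \<in> sphereS" using False by (simp add: sphereS_def norm_sgn)
    then have "f (u, norm w *\<^sub>R sgn w) = f0 u (norm w) + cmul (para (0, sgn w)) (f1 u (norm w))"
      using sl by blast
    then show ?thesis using False by (simp add: sgn_div_norm)
  qed
  let ?L = "cmul (para (0, jz::real^'n::{finite,linorder}))"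
  have X: "f (u, v *\<^sub>R jz) = f0 u v + ?L (f1 u v)" for u v using sl jz_sphere by blast
  have Y: "f (u, (-v) *\<^sub>R jz) = f0 u v - ?L (f1 u v)" for u v
    using sl[OF jz_sphere, of u "-v"] by (simp add: ev od cmul_minus_right)
  have b0: "norm (f0 u v) \<le> (norm (f (u, v *\<^sub>R jz)) + norm (f (u, (-v) *\<^sub>R jz))) / 2" for u v
  proof -
    have "f0 u v = (1/2) *\<^sub>R (f (u, v *\<^sub>R jz) + f (u, (-v) *\<^sub>R jz))"
      unfolding X[of u v] Y[of u v] by (simp add: vec_eq_iff)
    then show ?thesis by (simp add: norm_triangle_ineq)
  qed
  have b1: "norm (f1 u v) \<le> (norm (f (u, v *\<^sub>R jz)) + norm (f (u, (-v) *\<^sub>R jz))) / 2" for u v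
  proof -
    have "?L (f1 u v) = (1/2) *\<^sub>R (f (u, v *\<^sub>R jz) - f (u, (-v) *\<^sub>R jz))"
      unfolding X[of u v] Y[of u v] by (simp add: vec_eq_iff)
    then have "norm (f1 u v) = norm ((1/2) *\<^sub>R (f (u, v *\<^sub>R jz) - f (u, (-v) *\<^sub>R jz)))"
      by (metis norm_cmul_axis jz_def)
    then show ?thesis by (simp add: norm_triangle_ineq4)
  qed
  show ?thesis
    apply (rule exI[of _ f0], rule exI[of _ f1])
    using holo ev od rep b0 b1 by blast
qed

lemma montel_multi:
  fixes h :: "nat \<Rightarrow> 'i::finite \<Rightarrow> complex \<Rightarrow> complex"
  assumes holo: "\<And>k i. h k i holomorphic_on UNIV"
    and bnd: "\<And>i K. compact K \<Longrightarrow> \<exists>B. \<forall>k. \<forall>z\<in>K. norm (h k i z) \<le> B"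
  obtains r H where "strict_mono r" "\<And>i. H i holomorphic_on UNIV"
    "\<And>i K. compact K \<Longrightarrow> uniform_limit K (\<lambda>k. h (r k) i) (H i) sequentially"
proof -
  have "finite S \<Longrightarrow> \<exists>r H. strict_mono r \<and> (\<forall>i\<in>S. H i holomorphic_on UNIV \<and>
          (\<forall>K. compact K \<longrightarrow> uniform_limit K (\<lambda>k. h (r k) i) (H i) sequentially))" for S
  proof (induction S rule: finite_induct)
    case empty
    show ?case by (rule exI[of _ id]) (auto simp: strict_mono_def)
  next
    case (insert i S)
    then obtain r H where r: "strict_mono r" and H: "\<forall>j\<in>S. H j holomorphic_on UNIV \<and>
          (\<forall>K. compact K \<longrightarrow> uniform_limit K (\<lambda>k. h (r k) j) (H j) sequentially)" by blast
    obtain g r' where g: "g holomorphic_on UNIV" and r': "strict_mono (r' :: nat \<Rightarrow> nat)"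
      and ul: "\<And>K. \<lbrakk>compact K; K \<subseteq> UNIV\<rbrakk> \<Longrightarrow> uniform_limit K ((\<lambda>k. h (r k) i) \<circ> r') g sequentially"
    proof (rule Montel[of UNIV "range (\<lambda>k. h (r k) i)" "\<lambda>k. h (r k) i"])
      show "\<And>K. compact K \<Longrightarrow> K \<subseteq> UNIV \<Longrightarrow> \<exists>B. \<forall>f\<in>range (\<lambda>k. h (r k) i). \<forall>z\<in>K. norm (f z) \<le> B"
        using bnd by fastforce
    qed (use holo in auto)
    show ?case
    proof (intro exI conjI)
      show "strict_mono (r \<circ> r')" using r r' by (rule strict_mono_o)
      show "\<forall>j\<in>insert i S. (H(i := g)) j holomorphic_on UNIV \<and>
          (\<forall>K. compact K \<longrightarrow> uniform_limit K (\<lambda>k. h ((r \<circ> r') k) j) ((H(i := g)) j) sequentially)"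
      proof
        fix j assume j: "j \<in> insert i S"
        show "(H(i := g)) j holomorphic_on UNIV \<and>
          (\<forall>K. compact K \<longrightarrow> uniform_limit K (\<lambda>k. h ((r \<circ> r') k) j) ((H(i := g)) j) sequentially)"
        proof (cases "j = i")
          case True
          then show ?thesis using g ul by (simp add: o_def)
        next
          case False
          then have jS: "j \<in> S" using j by simp
          have "uniform_limit K (\<lambda>k. h (r (r' k)) j) (H j) sequentially" if "compact K" for K
            using filterlim_compose[OF H[rule_format, OF jS, THEN conjunct2, rule_format, OF that]
                filterlim_subseq[OF r']] by (simp add: o_def)
          then show ?thesis using False H jS by (simp add: o_def)
        qed
      qed
    qed
  qed
  from this[of UNIV] obtain r H where "strict_mono r" and "\<forall>i. H i holomorphic_on UNIV \<and>
          (\<forall>K. compact K \<longrightarrow> uniform_limit K (\<lambda>k. h (r k) i) (H i) sequentially)" by auto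
  then show ?thesis using that by blast
qed

lemma P_nonneg: "0 \<le> (r::real) powr a" by simp

lemma prox_bound:
  assumes "proximate_order \<rho>"
  shows "\<exists>B. \<forall>r. 0 \<le> r \<and> r \<le> R \<longrightarrow> r powr \<rho> r \<le> B"
proof -
  have nn: "\<And>r. r \<ge> 0 \<Longrightarrow> \<rho> r \<ge> 0" and dif: "\<And>r. r \<ge> 0 \<Longrightarrow> \<rho> differentiable (at r within {0..})"
    using assms unfolding proximate_order_def by auto
  have "continuous_on {0..} \<rho>"
    using dif by (auto simp: continuous_on_eq_continuous_within intro: differentiable_imp_continuous_within)
  then have "continuous_on {0..max 1 R} \<rho>" by (rule continuous_on_subset) auto
  then have "bounded (\<rho> ` {0..max 1 R})" by (intro compact_imp_bounded compact_continuous_image) auto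
  then obtain B where B0: "\<forall>r \<in> {0..max 1 R}. \<bar>\<rho> r\<bar> \<le> B" by (auto simp: bounded_real)
  then have B: "\<And>r. r \<in> {0..max 1 R} \<Longrightarrow> \<bar>\<rho> r\<bar> \<le> B" by blast
  show ?thesis
  proof (intro exI allI impI)
    fix r assume r: "0 \<le> r \<and> r \<le> R"
    show "r powr \<rho> r \<le> 1 + max 1 R powr B"
    proof (cases "r \<le> 1")
      case True
      then have "r powr \<rho> r \<le> 1" using r nn by (intro powr_le1) auto
      then show ?thesis by (smt (verit) powr_ge_zero)
    next
      case False
      then have "r powr \<rho> r \<le> r powr B" using B[of r] r by (intro powr_mono) auto
      also have "\<dots> \<le> max 1 R powr B" using B[of r] r False by (intro powr_mono2) auto
      finally show ?thesis by simp
    qed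
  qed
qed

lemma prox_at_top:
  assumes "proximate_order \<rho>"
  shows "filterlim (\<lambda>r. r powr \<rho> r) at_top at_top"
proof -
  obtain \<rho>0 where p0: "\<rho>0 > 0" and lim: "(\<rho> \<longlongrightarrow> \<rho>0) at_top"
    using assms unfolding proximate_order_def by auto
  have ev: "eventually (\<lambda>r. \<rho> r > \<rho>0 / 2) at_top"
    using order_tendstoD(1)[OF lim, of "\<rho>0/2"] p0 by simp
  have ev2: "eventually (\<lambda>r. r powr (\<rho>0/2) \<le> r powr \<rho> r) at_top"
    using ev eventually_ge_at_top[of 1]
    by eventually_elim (auto intro: powr_mono)
  have "filterlim (\<lambda>r::real. r powr (\<rho>0/2)) at_top at_top"
    using p0 by real_asymp
  then show ?thesis using ev2 by (rule filterlim_at_top_mono)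
qed

lemma vec_deriv:
  fixes \<phi> :: "'a::finite \<Rightarrow> real \<Rightarrow> real"
  assumes "\<And>A. ((\<phi> A) has_real_derivative d A) (at t)"
  shows "((\<lambda>t. \<chi> A. \<phi> A t) has_vector_derivative (\<chi> A. d A)) (at t)"
proof -
  have "\<And>A. (\<phi> A has_derivative (\<lambda>x. x * d A)) (at t)"
    using assms by (simp add: has_field_derivative_def mult.commute[of _ "d _"])
  then show ?thesis unfolding has_vector_derivative_def
    by (subst has_derivative_componentwise_within) (auto simp: Basis_vec_def inner_axis)
qed

lemma holo_partials:
  fixes H :: "complex \<Rightarrow> complex"
  assumes "H holomorphic_on UNIV"
  shows "((\<lambda>t. Re (H (Complex t v))) has_real_derivative Re (deriv H (Complex u v))) (at u)"
    and "((\<lambda>t. Im (H (Complex t v))) has_real_derivative Im (deriv H (Complex u v))) (at u)"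
    and "((\<lambda>t. Re (H (Complex u t))) has_real_derivative - Im (deriv H (Complex u v))) (at v)"
    and "((\<lambda>t. Im (H (Complex u t))) has_real_derivative Re (deriv H (Complex u v))) (at v)"
proof -
  have dH: "(H has_field_derivative deriv H z) (at z)" for z
    using assms by (auto intro: holomorphic_derivI)
  have c1: "((\<lambda>t. Complex t v) has_vector_derivative 1) (at u)"
    unfolding Complex_eq by (auto intro!: derivative_eq_intros has_vector_derivative_real_field)
  have c2: "((\<lambda>t. Complex u t) has_vector_derivative \<i>) (at v)"
    unfolding Complex_eq by (auto intro!: derivative_eq_intros has_vector_derivative_real_field)
  have d1: "((\<lambda>t. H (Complex t v)) has_vector_derivative deriv H (Complex u v)) (at u)"
    using field_vector_diff_chain_at[OF c1 dH] by (simp add: o_def)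
  have d2: "((\<lambda>t. H (Complex u t)) has_vector_derivative \<i> * deriv H (Complex u v)) (at v)"
    using field_vector_diff_chain_at[OF c2 dH] by (simp add: o_def)
  have bRe: "bounded_linear Re" and bIm: "bounded_linear Im"
    by (auto intro: bounded_linear_Re bounded_linear_Im)
  show "((\<lambda>t. Re (H (Complex t v))) has_real_derivative Re (deriv H (Complex u v))) (at u)"
    using bounded_linear.has_vector_derivative[OF bRe d1] by (simp add: has_real_derivative_iff_has_vector_derivative)
  show "((\<lambda>t. Im (H (Complex t v))) has_real_derivative Im (deriv H (Complex u v))) (at u)"
    using bounded_linear.has_vector_derivative[OF bIm d1] by (simp add: has_real_derivative_iff_has_vector_derivative)
  show "((\<lambda>t. Re (H (Complex u t))) has_real_derivative - Im (deriv H (Complex u v))) (at v)"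
    using bounded_linear.has_vector_derivative[OF bRe d2] by (simp add: has_real_derivative_iff_has_vector_derivative)
  show "((\<lambda>t. Im (H (Complex u t))) has_real_derivative Re (deriv H (Complex u v))) (at v)"
    using bounded_linear.has_vector_derivative[OF bIm d2] by (simp add: has_real_derivative_iff_has_vector_derivative)
qed

lemma norm_para_le:
  fixes j :: "real ^ 'n::finite"
  shows "norm (para (0, j)) \<le> real CARD('n set) * norm j"
proof -
  have c: "\<bar>para (0, j) $ A\<bar> \<le> norm j" for A
    by (auto simp: para_def component_le_norm_cart)
  have "norm (para (0, j)) \<le> (\<Sum>A\<in>UNIV. \<bar>para (0, j) $ A\<bar>)" by (rule norm_le_l1_cart)
  also have "\<dots> \<le> (\<Sum>A\<in>(UNIV::'n set set). norm j)" by (rule sum_mono) (rule c)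
  finally show ?thesis by simp
qed

lemma est:
  fixes a b :: "'n::{finite,linorder} clif" and c :: "'n set \<Rightarrow> complex" and s :: "real ^ 'n::{finite,linorder}"
  assumes s: "norm s \<le> 1" and ac: "\<And>A. a $ A = Re (c A)" and bc: "\<And>A. b $ A = Im (c A)"
  shows "norm (a + cmul (para (0, s)) b) \<le> (1 + real CARD('n set) ^ 3) * (\<Sum>A\<in>UNIV. cmod (c A))"
proof -
  let ?N = "real CARD('n set)"
  have na: "norm a \<le> (\<Sum>A\<in>UNIV. cmod (c A))"
  proof -
    have "norm a \<le> (\<Sum>A\<in>UNIV. \<bar>a $ A\<bar>)" by (rule norm_le_l1_cart)
    also have "\<dots> \<le> (\<Sum>A\<in>UNIV. cmod (c A))" by (rule sum_mono) (simp add: ac abs_Re_le_cmod)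
    finally show ?thesis .
  qed
  have nb: "norm b \<le> (\<Sum>A\<in>UNIV. cmod (c A))"
  proof -
    have "norm b \<le> (\<Sum>A\<in>UNIV. \<bar>b $ A\<bar>)" by (rule norm_le_l1_cart)
    also have "\<dots> \<le> (\<Sum>A\<in>UNIV. cmod (c A))" by (rule sum_mono) (simp add: bc abs_Im_le_cmod)
    finally show ?thesis .
  qed
  have np: "norm (para (0, s)) \<le> ?N"
    using norm_para_le[of s] s by (smt (verit) mult_left_le of_nat_0_le_iff)
  have "norm (cmul (para (0, s)) b) \<le> ?N * ?N * norm (para (0, s)) * norm b" by (rule norm_cmul_le)
  also have "\<dots> \<le> ?N * ?N * ?N * norm b"
    using np by (intro mult_right_mono mult_left_mono) auto
  also have "\<dots> \<le> ?N * ?N * ?N * (\<Sum>A\<in>UNIV. cmod (c A))"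
    using nb by (intro mult_left_mono) auto
  finally have "norm (cmul (para (0, s)) b) \<le> ?N ^ 3 * (\<Sum>A\<in>UNIV. cmod (c A))"
    by (simp add: power3_eq_cube)
  then show ?thesis using na norm_triangle_ineq[of a "cmul (para (0, s)) b"]
    by (simp add: algebra_simps)
qed

lemma norm_pair_jz: "norm (u, v *\<^sub>R (jz :: real ^ 'n::finite)) = cmod (Complex u v)"
  by (simp add: norm_Pair complex_norm jz_def)

lemma norm_pair_w: "norm (u, w) = cmod (Complex u (norm w))"
  by (simp add: norm_Pair complex_norm)

definition srep :: "(real \<times> (real ^ 'n::{finite,linorder}) \<Rightarrow> 'n clif) \<Rightarrow> (real \<Rightarrow> real \<Rightarrow> 'n clif) \<Rightarrow> (real \<Rightarrow> real \<Rightarrow> 'n clif) \<Rightarrow> bool"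
  where "srep f f0 f1 \<longleftrightarrow>
    (\<forall>A. (\<lambda>z. complex_of_real (f0 (Re z) (Im z) $ A) + \<i> * complex_of_real (f1 (Re z) (Im z) $ A)) holomorphic_on UNIV) \<and>
    (\<forall>u v. f0 u (-v) = f0 u v) \<and> (\<forall>u v. f1 u (-v) = - f1 u v) \<and>
    (\<forall>u w. f (u, w) = f0 u (norm w) + cmul (para (0, sgn w)) (f1 u (norm w))) \<and>
    (\<forall>u v. norm (f0 u v) \<le> (norm (f (u, v *\<^sub>R jz)) + norm (f (u, (-v) *\<^sub>R jz))) / 2) \<and>
    (\<forall>u v. norm (f1 u v) \<le> (norm (f (u, v *\<^sub>R jz)) + norm (f (u, (-v) *\<^sub>R jz))) / 2)"

lemma srep_ex: "slice_monogenic f \<Longrightarrow> \<exists>f0 f1. srep f f0 f1"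
  unfolding srep_def by (rule slice_rep)

lemma cont_deriv_comp:
  assumes "H holomorphic_on UNIV"
  shows "continuous_on UNIV (\<lambda>p::real\<times>real. deriv H (Complex (fst p) (snd p)))"
proof -
  have "continuous_on UNIV (deriv H)"
    using assms by (intro holomorphic_on_imp_continuous_on holomorphic_deriv) auto
  then show ?thesis
    by (rule continuous_on_compose2) (auto intro!: continuous_intros)
qed

lemma compact_part:
  fixes F :: "nat \<Rightarrow> real \<times> (real ^ 'n::{finite,linorder}) \<Rightarrow> 'n clif" and M :: real
  assumes prox: "proximate_order \<rho>" and s1: "0 < \<sigma>1" and s12: "\<sigma>1 < \<sigma>2"
    and FA: "\<And>k. F k \<in> Aspace \<rho> \<sigma>1" and FM: "\<And>k. Anorm \<rho> \<sigma>1 (F k) \<le> M"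
  shows "\<exists>r g. strict_mono r \<and> g \<in> Aspace \<rho> \<sigma>2 \<and> (\<lambda>k. Anorm \<rho> \<sigma>2 (\<lambda>x. F (r k) x - g x)) \<longlonglongrightarrow> 0"
proof -
  define P where "P = (\<lambda>r::real. r powr \<rho> r)"
  define \<Phi> where "\<Phi> = (\<lambda>r. M * exp (\<sigma>1 * P r))"
  have Pnn: "0 \<le> P r" for r by (simp add: P_def)
  have Fw: "norm (F k x) * weight \<rho> \<sigma>1 x \<le> M" for k x
  proof -
    have "norm (F k x) * weight \<rho> \<sigma>1 x \<le> Anorm \<rho> \<sigma>1 (F k)"
      unfolding Anorm_def using FA[of k] by (intro cSUP_upper) (auto simp: Aspace_def)
    then show ?thesis using FM[of k] by linarith
  qed
  have M0: "0 \<le> M"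
    by (rule order_trans[OF _ Fw[of 0 0]]) (simp add: weight_def)
  have Fb: "norm (F k x) \<le> \<Phi> (norm x)" for k x
  proof -
    have "norm (F k x) * weight \<rho> \<sigma>1 x * exp (\<sigma>1 * P (norm x)) \<le> M * exp (\<sigma>1 * P (norm x))"
      using Fw[of k x] by (intro mult_right_mono) auto
    moreover have "weight \<rho> \<sigma>1 x * exp (\<sigma>1 * P (norm x)) = 1"
      by (simp add: weight_def P_def flip: exp_add)
    ultimately show ?thesis by (simp add: \<Phi>_def mult.assoc)
  qed
  have "\<forall>k. \<exists>p. srep (F k) (fst p) (snd p)"
    using srep_ex FA by (auto simp: Aspace_def)
  then have "\<exists>p. \<forall>k. srep (F k) (fst (p k)) (snd (p k))" by (rule choice)
  then obtain p where p: "\<And>k. srep (F k) (fst (p k)) (snd (p k))" by blast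
  define f0 where "f0 = (\<lambda>k. fst (p k))"
  define f1 where "f1 = (\<lambda>k. snd (p k))"
  have sr: "srep (F k) (f0 k) (f1 k)" for k using p by (simp add: f0_def f1_def)
  define h where "h = (\<lambda>k A z. complex_of_real (f0 k (Re z) (Im z) $ A) + \<i> * complex_of_real (f1 k (Re z) (Im z) $ A))"
  have hholo: "h k A holomorphic_on UNIV" for k A
    using sr[of k] unfolding srep_def h_def by blast
  have hb: "cmod (h k A z) \<le> 2 * \<Phi> (cmod z)" for k A z
  proof -
    have "cmod (h k A z) \<le> \<bar>f0 k (Re z) (Im z) $ A\<bar> + \<bar>f1 k (Re z) (Im z) $ A\<bar>"
      using cmod_le[of "h k A z"] by (simp add: h_def)
    also have "\<dots> \<le> norm (f0 k (Re z) (Im z)) + norm (f1 k (Re z) (Im z))"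
      by (intro add_mono component_le_norm_cart)
    also have "\<dots> \<le> norm (F k (Re z, Im z *\<^sub>R jz)) + norm (F k (Re z, (- Im z) *\<^sub>R jz))"
    proof -
      have "norm (f0 k (Re z) (Im z)) \<le> (norm (F k (Re z, Im z *\<^sub>R jz)) + norm (F k (Re z, (- Im z) *\<^sub>R jz))) / 2"
        "norm (f1 k (Re z) (Im z)) \<le> (norm (F k (Re z, Im z *\<^sub>R jz)) + norm (F k (Re z, (- Im z) *\<^sub>R jz))) / 2"
        using sr[of k] unfolding srep_def by blast+
      from add_mono[OF this] show ?thesis by (simp add: field_simps)
    qed
    also have "\<dots> \<le> 2 * \<Phi> (cmod z)"
    proof -
      have e1: "norm (Re z, Im z *\<^sub>R (jz::real^'n::{finite,linorder})) = cmod z"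
        using norm_pair_jz[of "Re z" "Im z"] by simp
      have e2: "norm (Re z, (- Im z) *\<^sub>R (jz::real^'n::{finite,linorder})) = cmod z"
        using norm_pair_jz[of "Re z" "- Im z"] by (simp add: complex_norm cmod_def)
      show ?thesis
        using Fb[of k "(Re z, Im z *\<^sub>R jz)"] Fb[of k "(Re z, (- Im z) *\<^sub>R jz)"] e1 e2 by simp
    qed
    finally show ?thesis .
  qed
  have hbK: "\<exists>B. \<forall>k. \<forall>z\<in>K. cmod (h k A z) \<le> B" if cK: "compact K" for A K
  proof -
    obtain R where R: "\<And>z. z \<in> K \<Longrightarrow> cmod z \<le> R"
      using compact_imp_bounded[OF cK] by (auto simp: bounded_iff)
    obtain B where B: "\<And>r. 0 \<le> r \<and> r \<le> R \<Longrightarrow> r powr \<rho> r \<le> B"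
      using prox_bound[OF prox, of R] by blast
    show ?thesis
    proof (intro exI allI ballI)
      fix k z assume z: "z \<in> K"
      have "P (cmod z) \<le> B" using B[of "cmod z"] R[OF z] by (simp add: P_def)
      then have "\<Phi> (cmod z) \<le> M * exp (\<sigma>1 * B)"
        unfolding \<Phi>_def using M0 s1 by (intro mult_left_mono) auto
      then show "cmod (h k A z) \<le> 2 * (M * exp (\<sigma>1 * B))" using hb[of k A z] by linarith
    qed
  qed
  obtain r H where r: "strict_mono r" and Hholo: "\<And>A. H A holomorphic_on UNIV"
    and ul: "\<And>A K. compact K \<Longrightarrow> uniform_limit K (\<lambda>k. h (r k) A) (H A) sequentially"
  proof -
    obtain r H where a: "strict_mono r" "\<And>i. H i holomorphic_on UNIV"
      "\<And>i K. compact K \<Longrightarrow> uniform_limit K (\<lambda>k. h (r k) i) (H i) sequentially"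
      using montel_multi[of h, OF hholo hbK] by blast
    show thesis using that[OF a(1) a(2) a(3)] .
  qed
  have Hlim: "(\<lambda>k. h (r k) A z) \<longlonglongrightarrow> H A z" for A z
    using tendsto_uniform_limitI[OF ul[of "{z}"]] by simp
  have Hb: "cmod (H A z) \<le> 2 * \<Phi> (cmod z)" for A z
    by (rule LIMSEQ_le_const2[OF tendsto_norm[OF Hlim]]) (use hb in auto)
  have Hcnj: "H A (cnj z) = cnj (H A z)" for A z
  proof -
    have "h k A (cnj z) = cnj (h k A z)" for k
      using sr[of k] unfolding srep_def h_def by (simp add: complex_eq_iff)
    then have "(\<lambda>k. h (r k) A (cnj z)) \<longlonglongrightarrow> cnj (H A z)"
      using tendsto_cnj[OF Hlim[of A z]] by simp
    then show ?thesis using Hlim[of A "cnj z"] LIMSEQ_unique by blast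
  qed
  define G0 where "G0 = (\<lambda>u v. \<chi> A. Re (H A (Complex u v)))"
  define G1 where "G1 = (\<lambda>u v. \<chi> A. Im (H A (Complex u v)))"
  have cc: "Complex u (-v) = cnj (Complex u v)" for u v by (simp add: complex_eq_iff)
  have G0ev: "G0 u (-v) = G0 u v" for u v by (simp add: G0_def cc Hcnj)
  have G1od: "G1 u (-v) = - G1 u v" for u v by (simp add: G1_def cc Hcnj vec_eq_iff)
  define g where "g = (\<lambda>x. G0 (fst x) (norm (snd x)) + cmul (para (0, sgn (snd x))) (G1 (fst x) (norm (snd x))))"
  define D where "D = (\<lambda>A u v. deriv (H A) (Complex u v))"
  have Dc: "continuous_on UNIV (\<lambda>(u, v). D A u v)" for A
    using cont_deriv_comp[OF Hholo[of A]] by (simp add: D_def split_beta)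
  have gsm: "slice_monogenic g"
    unfolding slice_monogenic_def
  proof (intro exI conjI allI impI)
    show "C1_partials G0 (\<lambda>u v. \<chi> A. Re (D A u v)) (\<lambda>u v. \<chi> A. - Im (D A u v))"
      unfolding C1_partials_def G0_def D_def
      using Dc unfolding D_def
      by (auto intro!: vec_deriv holo_partials Hholo continuous_intros simp: split_beta)
    show "C1_partials G1 (\<lambda>u v. \<chi> A. Im (D A u v)) (\<lambda>u v. \<chi> A. Re (D A u v))"
      unfolding C1_partials_def G1_def D_def
      using Dc unfolding D_def
      by (auto intro!: vec_deriv holo_partials Hholo continuous_intros simp: split_beta)
    fix u v show "G0 u (-v) = G0 u v" by (rule G0ev)
    show "G1 u (-v) = - G1 u v" by (rule G1od)
    show "(\<chi> A. Re (D A u v)) = (\<chi> A. Re (D A u v))" by simp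
    show "(\<chi> A. - Im (D A u v)) = - (\<chi> A. Im (D A u v))" by (simp add: vec_eq_iff)
    fix j :: "real ^ 'n::{finite,linorder}" assume "j \<in> sphereS"
    then show "g (u, v *\<^sub>R j) = G0 u v + cmul (para (0, j)) (G1 u v)"
      unfolding g_def using slice_formula[of G0 G1 j u v, OF G0ev G1od] by (simp add: sphereS_def)
  qed
  define N where "N = real CARD('n::{finite,linorder} set)"
  define C where "C = 1 + N ^ 3"
  have N0: "0 \<le> N" by (simp add: N_def)
  have C1: "1 \<le> C" using N0 by (simp add: C_def)
  have sgn_le: "norm (sgn w) \<le> 1" for w :: "real ^ 'n::{finite,linorder}" by (simp add: norm_sgn)
  have dest: "norm (F (r k) x - g x) \<le> C * (\<Sum>A\<in>UNIV. cmod (h (r k) A (Complex (fst x) (norm (snd x))) - H A (Complex (fst x) (norm (snd x)))))" for k x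
  proof -
    obtain u w where x: "x = (u, w)" by (cases x)
    have "F (r k) (u, w) = f0 (r k) u (norm w) + cmul (para (0, sgn w)) (f1 (r k) u (norm w))"
      using sr[of "r k"] unfolding srep_def by blast
    then have "F (r k) x - g x = (f0 (r k) u (norm w) - G0 u (norm w)) + cmul (para (0, sgn w)) (f1 (r k) u (norm w) - G1 u (norm w))"
      by (simp add: x g_def cmul_diff_right algebra_simps)
    also have "norm \<dots> \<le> (1 + real CARD('n::{finite,linorder} set) ^ 3) * (\<Sum>A\<in>UNIV. cmod (h (r k) A (Complex u (norm w)) - H A (Complex u (norm w))))"
      by (rule est[OF sgn_le]) (simp_all add: h_def G0_def G1_def)
    finally show ?thesis by (simp add: x C_def N_def)
  qed
  have gest: "norm (g x) \<le> C * (\<Sum>A\<in>UNIV. cmod (H A (Complex (fst x) (norm (snd x)))))" for x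
    unfolding g_def C_def N_def by (rule est[OF sgn_le]) (simp_all add: G0_def G1_def)
  have gb: "norm (g x) \<le> 2 * C * N * \<Phi> (norm x)" for x
  proof -
    have hb1: "cmod (H A (Complex (fst x) (norm (snd x)))) \<le> 2 * \<Phi> (norm x)" for A
      using Hb[of A "Complex (fst x) (norm (snd x))"] norm_pair_w[of "fst x" "snd x"] by simp
    have "(\<Sum>A\<in>UNIV. cmod (H A (Complex (fst x) (norm (snd x))))) \<le> (\<Sum>A\<in>(UNIV::'n::{finite,linorder} set set). 2 * \<Phi> (norm x))"
      by (intro sum_mono hb1)
    also have "\<dots> = N * (2 * \<Phi> (norm x))" by (simp add: N_def)
    finally have "C * (\<Sum>A\<in>UNIV. cmod (H A (Complex (fst x) (norm (snd x))))) \<le> C * (N * (2 * \<Phi> (norm x)))"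
      using C1 by (intro mult_left_mono) auto
    then show ?thesis using gest[of x] by (simp add: mult_ac)
  qed
  have PhiW: "\<Phi> (norm x) * weight \<rho> \<sigma>2 x = M * exp (- (\<sigma>2 - \<sigma>1) * P (norm x))" for x
    by (simp add: \<Phi>_def weight_def P_def algebra_simps flip: exp_add)
  have exple: "exp (- (\<sigma>2 - \<sigma>1) * P t) \<le> 1" for t
    using s12 Pnn[of t] by (simp add: mult_nonpos_nonneg)
  have w1: "weight \<rho> \<sigma>2 x \<le> 1" for x
    using s1 s12 by (simp add: weight_def mult_nonneg_nonneg)
  have w0: "0 \<le> weight \<rho> \<sigma>2 x" for x by (simp add: weight_def)
  have gA: "g \<in> Aspace \<rho> \<sigma>2"
    unfolding Aspace_def
  proof (intro CollectI conjI gsm)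
    show "bdd_above (range (\<lambda>x. norm (g x) * weight \<rho> \<sigma>2 x))"
    proof (rule bdd_aboveI2)
      fix x
      have "norm (g x) * weight \<rho> \<sigma>2 x \<le> 2 * C * N * \<Phi> (norm x) * weight \<rho> \<sigma>2 x"
        using gb[of x] w0[of x] by (rule mult_right_mono)
      also have "\<dots> = 2 * C * N * (M * exp (- (\<sigma>2 - \<sigma>1) * P (norm x)))"
        using PhiW[of x] by (simp add: mult.assoc)
      also have "\<dots> \<le> 2 * C * N * (M * 1)"
        using exple M0 C1 N0 by (intro mult_left_mono) auto
      finally show "norm (g x) * weight \<rho> \<sigma>2 x \<le> 2 * C * N * M" by simp
    qed
  qed
  have conv: "(\<lambda>k. Anorm \<rho> \<sigma>2 (\<lambda>x. F (r k) x - g x)) \<longlonglongrightarrow> 0"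
  proof (rule LIMSEQ_I)
    fix e :: real assume e: "0 < e"
    define Dc where "Dc = (1 + 2 * C * N) * M"
    have Dc0: "0 \<le> Dc" using M0 C1 N0 by (simp add: Dc_def)
    have lim1: "filterlim (\<lambda>t. (\<sigma>2 - \<sigma>1) * P t) at_top at_top"
      using s12 prox_at_top[OF prox] unfolding P_def
      by (intro filterlim_tendsto_pos_mult_at_top[OF tendsto_const]) auto
    have lim2: "((\<lambda>t. exp (- ((\<sigma>2 - \<sigma>1) * P t))) \<longlongrightarrow> 0) at_top"
      by (rule filterlim_compose[OF exp_at_bot]) (use lim1 in \<open>simp add: filterlim_uminus_at_top\<close>)
    have "((\<lambda>t. Dc * exp (- ((\<sigma>2 - \<sigma>1) * P t))) \<longlongrightarrow> Dc * 0) at_top"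
      by (intro tendsto_mult tendsto_const lim2)
    then have "eventually (\<lambda>t. Dc * exp (- ((\<sigma>2 - \<sigma>1) * P t)) < e / 2) at_top"
      using e by (intro order_tendstoD(2)) auto
    then obtain R where R: "\<And>t. t \<ge> R \<Longrightarrow> Dc * exp (- ((\<sigma>2 - \<sigma>1) * P t)) < e / 2"
      by (auto simp: eventually_at_top_linorder)
    define e' where "e' = e / (2 * (C * N + 1))"
    have CN0: "0 \<le> C * N" using C1 N0 by simp
    have e'0: "0 < e'" using e CN0 by (simp add: e'_def)
    have "eventually (\<lambda>k. \<forall>A. \<forall>z\<in>cball 0 R. dist (h (r k) A z) (H A z) < e') sequentially"
      using ul[of "cball 0 R"] e'0 by (intro eventually_all_finite) (auto simp: uniform_limit_iff)
    then obtain n0 where n0': "\<forall>k\<ge>n0. \<forall>A. \<forall>z\<in>cball 0 R. dist (h (r k) A z) (H A z) < e'"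
      unfolding eventually_sequentially by blast
    have n0: "\<And>k A z. k \<ge> n0 \<Longrightarrow> z \<in> cball 0 R \<Longrightarrow> dist (h (r k) A z) (H A z) < e'"
      using n0' by blast
    show "\<exists>no. \<forall>k\<ge>no. norm (Anorm \<rho> \<sigma>2 (\<lambda>x. F (r k) x - g x) - 0) < e"
    proof (intro exI allI impI)
      fix k assume k: "n0 \<le> k"
      have pt: "norm (F (r k) x - g x) * weight \<rho> \<sigma>2 x \<le> e / 2" for x
      proof (cases "norm x \<le> R")
        case True
        define z where "z = Complex (fst x) (norm (snd x))"
        have zK: "z \<in> cball 0 R" using True norm_pair_w[of "fst x" "snd x"] by (simp add: z_def)
        have "norm (F (r k) x - g x) \<le> C * (\<Sum>A\<in>UNIV. cmod (h (r k) A z - H A z))"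
          using dest[of k x] by (simp add: z_def)
        also have "\<dots> \<le> C * (\<Sum>A\<in>(UNIV::'n::{finite,linorder} set set). e')"
          using n0[OF k zK] C1 by (intro mult_left_mono sum_mono) (auto simp: dist_norm less_imp_le)
        also have "\<dots> = C * N * e'" by (simp add: N_def)
        also have "\<dots> \<le> e / 2"
          using e CN0 by (simp add: e'_def field_simps)
        finally have "norm (F (r k) x - g x) \<le> e / 2" .
        then show ?thesis using w1[of x] w0[of x]
          by (smt (verit) mult_left_le norm_ge_zero)
      next
        case False
        have "norm (F (r k) x - g x) \<le> (1 + 2 * C * N) * \<Phi> (norm x)"
          using norm_triangle_ineq4[of "F (r k) x" "g x"] Fb[of "r k" x] gb[of x] by (simp add: algebra_simps)
        then have "norm (F (r k) x - g x) * weight \<rho> \<sigma>2 x \<le> (1 + 2 * C * N) * \<Phi> (norm x) * weight \<rho> \<sigma>2 x"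
          using w0[of x] by (rule mult_right_mono)
        also have "\<dots> = Dc * exp (- ((\<sigma>2 - \<sigma>1) * P (norm x)))"
          using PhiW[of x] by (simp add: Dc_def mult.assoc algebra_simps)
        also have "\<dots> < e / 2" using R[of "norm x"] False by simp
        finally show ?thesis by simp
      qed
      have bdd: "bdd_above (range (\<lambda>x. norm (F (r k) x - g x) * weight \<rho> \<sigma>2 x))"
        using pt by (intro bdd_aboveI2) 
      have up: "Anorm \<rho> \<sigma>2 (\<lambda>x. F (r k) x - g x) \<le> e / 2"
        unfolding Anorm_def using pt by (intro cSUP_least) auto
      have lo: "0 \<le> Anorm \<rho> \<sigma>2 (\<lambda>x. F (r k) x - g x)"
      proof -
        have "0 \<le> norm (F (r k) 0 - g 0) * weight \<rho> \<sigma>2 (0::real \<times> (real ^ 'n::{finite,linorder}))" using w0[of 0] by (intro mult_nonneg_nonneg) auto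
        also have "norm (F (r k) 0 - g 0) * weight \<rho> \<sigma>2 (0::real \<times> (real ^ 'n::{finite,linorder})) \<le> Anorm \<rho> \<sigma>2 (\<lambda>x. F (r k) x - g x)"
          unfolding Anorm_def by (rule cSUP_upper[OF UNIV_I bdd])
        finally show ?thesis .
      qed
      show "norm (Anorm \<rho> \<sigma>2 (\<lambda>x. F (r k) x - g x) - 0) < e"
        using up lo e by simp
    qed
  qed
  show ?thesis using r gA conv by blast
qed

lemma incl:
  assumes "0 < \<sigma>1" and "\<sigma>1 < \<sigma>2"
  shows "(Aspace \<rho> \<sigma>1 :: (real \<times> (real ^ 'n::{finite,linorder}) \<Rightarrow> real ^ ('n::{finite,linorder} set)) set) \<subseteq> Aspace \<rho> \<sigma>2"
proof
  fix f :: "real \<times> (real ^ 'n::{finite,linorder}) \<Rightarrow> real ^ ('n::{finite,linorder} set)"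
  assume f: "f \<in> Aspace \<rho> \<sigma>1"
  then obtain B where B: "\<And>x. norm (f x) * weight \<rho> \<sigma>1 x \<le> B"
    by (auto simp: Aspace_def bdd_above_def)
  have "norm (f x) * weight \<rho> \<sigma>2 x \<le> B" for x
  proof -
    have "weight \<rho> \<sigma>2 x \<le> weight \<rho> \<sigma>1 x"
      using assms by (simp add: weight_def mult_right_mono)
    then have "norm (f x) * weight \<rho> \<sigma>2 x \<le> norm (f x) * weight \<rho> \<sigma>1 x"
      by (simp add: mult_left_mono)
    then show ?thesis using B[of x] by linarith
  qed
  then have "bdd_above (range (\<lambda>x. norm (f x) * weight \<rho> \<sigma>2 x))" by (rule bdd_aboveI2)
  then show "f \<in> Aspace \<rho> \<sigma>2" using f by (simp add: Aspace_def)
qed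

theorem lemma3p2:
  fixes \<rho> :: "real \<Rightarrow> real" and \<sigma>1 \<sigma>2 :: real
  assumes "proximate_order \<rho>" and "0 < \<sigma>1" and "\<sigma>1 < \<sigma>2"
  shows "(Aspace \<rho> \<sigma>1 :: (real \<times> (real ^ 'n::{finite,linorder}) \<Rightarrow> real ^ ('n::{finite,linorder} set)) set)
           \<subseteq> Aspace \<rho> \<sigma>2 \<and>
    (\<forall>(F :: nat \<Rightarrow> real \<times> (real ^ 'n::{finite,linorder}) \<Rightarrow> real ^ ('n::{finite,linorder} set)) M.
       (\<forall>k. F k \<in> Aspace \<rho> \<sigma>1 \<and> Anorm \<rho> \<sigma>1 (F k) \<le> M) \<longrightarrow>
       (\<exists>r g. strict_mono r \<and> g \<in> Aspace \<rho> \<sigma>2 \<and>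
          (\<lambda>k. Anorm \<rho> \<sigma>2 (\<lambda>x. F (r k) x - g x)) \<longlonglongrightarrow> 0))"
proof (intro conjI allI impI)
  show "(Aspace \<rho> \<sigma>1 :: (real \<times> (real ^ 'n::{finite,linorder}) \<Rightarrow> real ^ ('n::{finite,linorder} set)) set) \<subseteq> Aspace \<rho> \<sigma>2"
    using assms(2,3) by (rule incl)
  fix F :: "nat \<Rightarrow> real \<times> (real ^ 'n::{finite,linorder}) \<Rightarrow> real ^ ('n::{finite,linorder} set)" and M
  assume "\<forall>k. F k \<in> Aspace \<rho> \<sigma>1 \<and> Anorm \<rho> \<sigma>1 (F k) \<le> M"
  then show "\<exists>r g. strict_mono r \<and> g \<in> Aspace \<rho> \<sigma>2 \<and> (\<lambda>k. Anorm \<rho> \<sigma>2 (\<lambda>x. F (r k) x - g x)) \<longlonglongrightarrow> 0"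
    using compact_part[OF assms, of F M] by blast
qed

end
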